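(* For $n\ge2$, let $b_n$ be the number of permutations in $\mathcal S_n$ that contain $(123,\emptyset,\{0,1\})$. Then $b_n=\frac12(n-1)!\,(n-2)$.
   Context: For $n\ge1$, $\mathcal S_n$ is the set of permutations $\pi=\pi_1\cdots\pi_n$ of $[n]$. A bi-vincular pattern of length $k$ is a triple $p=(\sigma,X,Y)$ with $\sigma\in\mathcal S_k$ and $X,Y\subseteq\{0,1,\dots,k\}$. A permutation $\pi\in\mathcal S_n$ contains $p$ if there are indices $1\le i_1<\dots<i_k\le n$ such that $(\pi_{i_1},\dots,\pi_{i_k})$ is order-isomorphic to $\sigma$ and, letting $j_1<\dots<j_k$ be the values $\pi_{i_1},\dots,\pi_{i_k}$ sorted increasingly and setting $i_0=j_0=0$, $i_{k+1}=j_{k+1}=n+1$, one has $i_{x+1}=i_x+1$ for all $x\in X$ and $j_{y+1}=j_y+1$ for all $y\in Y$. *)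

theory Defs
  imports Main "HOL-Combinatorics.Multiset_Permutations"
begin

text \<open>A permutation p of [n] is a list of length n (one-line notation), pi_i = p ! (i - 1).
  A bi-vincular pattern is (sigma, X, Y) with sigma a list (one-line notation of a permutation of [k]).
  The index function i is 1-based on positions 1..k; positions/values are extended by
  i_0 = j_0 = 0 and i_(k+1) = j_(k+1) = n + 1.\<close>

definition contains_bv :: "nat list \<Rightarrow> nat list \<Rightarrow> nat set \<Rightarrow> nat set \<Rightarrow> bool" where
  "contains_bv p sigma X Y \<longleftrightarrow>
     (let n = length p; k = length sigma in
      \<exists>i :: nat \<Rightarrow> nat.
        (\<forall>a \<in> {1..k}. 1 \<le> i a \<and> i a \<le> n) \<and>
        (\<forall>a \<in> {1..k}. \<forall>b \<in> {1..k}. a < b \<longrightarrow> i a < i b) \<and>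
        (\<forall>a \<in> {1..k}. \<forall>b \<in> {1..k}.
            (p ! (i a - 1) < p ! (i b - 1) \<longleftrightarrow> sigma ! (a - 1) < sigma ! (b - 1))) \<and>
        (let vals = sort (map (\<lambda>a. p ! (i a - 1)) [1..<k+1]);
             ie = (\<lambda>x. if x = 0 then 0 else if x = k + 1 then n + 1 else i x);
             je = (\<lambda>x. if x = 0 then 0 else if x = k + 1 then n + 1 else vals ! (x - 1))
         in (\<forall>x \<in> X. ie (x + 1) = ie x + 1) \<and> (\<forall>y \<in> Y. je (y + 1) = je y + 1)))"

end

theory Submission imports Defs begin

lemma char:
  assumes p: "p \<in> permutations_of_set {1..n}"
  shows "contains_bv p [1,2,3] {} {0,1} \<longleftrightarrow> (\<exists>a b. a < b \<and> b < n - 1 \<and> p!a = 1 \<and> p!b = 2)"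
proof -
  have sp: "set p = {1..n}" and dp: "distinct p" using p by (auto simp: permutations_of_set_def)
  have lp: "length p = n" using distinct_card[OF dp] sp by simp
  show ?thesis
  proof
    assume "contains_bv p [1,2,3] {} {0,1}"
    moreover have len3: "length [1,2,3::nat] = 3" by simp
    ultimately obtain i where r: "\<forall>a \<in> {1..3}. 1 \<le> i a \<and> i a \<le> n"
      and m: "\<forall>a \<in> {1..3}. \<forall>b \<in> {1..3::nat}. a < b \<longrightarrow> i a < i b"
      and o: "\<forall>a \<in> {1..3}. \<forall>b \<in> {1..3::nat}.
            (p ! (i a - 1) < p ! (i b - 1) \<longleftrightarrow> [1,2,3::nat] ! (a - 1) < [1,2,3::nat] ! (b - 1))"
      and y: "\<forall>y \<in> {0,1::nat}. (\<lambda>x. if x = 0 then 0 else if x = 3 + 1 then n + 1 else sort (map (\<lambda>a. p ! (i a - 1)) [1..<3+1]) ! (x - 1)) (y + 1) = (\<lambda>x. if x = 0 then 0 else if x = 3 + 1 then n + 1 else sort (map (\<lambda>a. p ! (i a - 1)) [1..<3+1]) ! (x - 1)) y + 1"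
      unfolding contains_bv_def Let_def lp len3 by (elim exE conjE) (rule that)
    have r1: "1 \<le> i 1" "i 3 \<le> n" using r by auto
    have m12: "i 1 < i 2" "i 2 < i 3" using m by auto
    have o12: "p!(i 1 - 1) < p!(i 2 - 1)" "p!(i 2 - 1) < p!(i 3 - 1)" using o by auto
    have "[1..<3+1] = [1,2,3::nat]" by (simp add: upt_rec)
    hence "map (\<lambda>a. p ! (i a - 1)) [1..<3+1] = [p!(i 1 - 1), p!(i 2 - 1), p!(i 3 - 1)]" by simp
    moreover have "sorted [p!(i 1 - 1), p!(i 2 - 1), p!(i 3 - 1)]" using o12 by simp
    ultimately have "sort (map (\<lambda>a. p ! (i a - 1)) [1..<3+1]) = [p!(i 1 - 1), p!(i 2 - 1), p!(i 3 - 1)]"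
      using sorted_sort_id by metis
    with y have "p!(i 1 - 1) = 1" "p!(i 2 - 1) = 2" by auto
    then show "\<exists>a b. a < b \<and> b < n - 1 \<and> p!a = 1 \<and> p!b = 2"
      using r1 m12 by (intro exI[of _ "i 1 - 1"] exI[of _ "i 2 - 1"]) auto
  next
    assume "\<exists>a b. a < b \<and> b < n - 1 \<and> p!a = 1 \<and> p!b = 2"
    then obtain a b where ab: "a < b" "b < n - 1" "p!a = 1" "p!b = 2" by blast
    define c where "c = p!(n-1)"
    have "c \<in> {1..n}" using nth_mem[of "n-1" p] sp lp ab unfolding c_def by auto
    moreover have "c \<noteq> 1" using nth_eq_iff_index_eq[OF dp, of a "n-1"] ab lp unfolding c_def by auto
    moreover have "c \<noteq> 2" using nth_eq_iff_index_eq[OF dp, of b "n-1"] ab lp unfolding c_def by auto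
    ultimately have c3: "c \<ge> 3" by auto
    define i where "i = (\<lambda>x::nat. if x = 1 then a+1 else if x = 2 then b+1 else n)"
    have e: "{1..3::nat} = {1,2,3}" by auto
    have len3': "length [1,2,3::nat] = 3" by simp
    have "[1..<3+1] = [1,2,3::nat]" by (simp add: upt_rec)
    hence s: "sort (map (\<lambda>x. p ! (i x - 1)) [1..<3+1]) = [1,2,c]"
      using ab c3 by (simp add: i_def c_def)
    show "contains_bv p [1,2,3] {} {0,1}"
      unfolding contains_bv_def Let_def lp len3' e
      apply (rule exI[of _ i])
      using ab c3 s unfolding c_def by (auto simp: i_def)
  qed
qed

definition sw :: "nat \<Rightarrow> nat" where "sw x = (if x = 1 then 2 else if x = 2 then 1 else x)"

lemma sw_sw[simp]: "sw (sw x) = x" by (simp add: sw_def)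
lemma inj_sw: "inj sw" by (metis injI sw_sw)
lemma sw_img: "n \<ge> 2 \<Longrightarrow> sw ` {1..n} = {1..n}"
  by (auto simp: sw_def image_iff)

lemma map_sw_perm: "n \<ge> 2 \<Longrightarrow> p \<in> permutations_of_set {1..n} \<Longrightarrow> map sw p \<in> permutations_of_set {1..n}"
  unfolding permutations_of_set_def using sw_img inj_sw by (auto simp: distinct_map inj_on_def)

lemma swap_sub:
  assumes n: "n \<ge> 2"
  shows "map sw ` {p \<in> permutations_of_set {1..n}. \<exists>a b. a<b \<and> b<n \<and> p!a=u \<and> p!b=v}
     \<subseteq> {p \<in> permutations_of_set {1..n}. \<exists>a b. a<b \<and> b<n \<and> p!a=sw u \<and> p!b=sw v}"
proof
  fix q assume "q \<in> map sw ` {p \<in> permutations_of_set {1..n}. \<exists>a b. a<b \<and> b<n \<and> p!a=u \<and> p!b=v}"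
  then obtain p a b where q: "q = map sw p" "p \<in> permutations_of_set {1..n}" "a<b" "b<n" "p!a=u" "p!b=v" by blast
  have lp: "length p = n" using q(2) distinct_card by (fastforce simp: permutations_of_set_def)
  show "q \<in> {p \<in> permutations_of_set {1..n}. \<exists>a b. a<b \<and> b<n \<and> p!a=sw u \<and> p!b=sw v}"
    using q lp map_sw_perm[OF n q(2)] by (intro CollectI conjI exI[of _ a] exI[of _ b]) auto
qed

theorem mainTheorem12:
  fixes n :: nat
  assumes "n \<ge> 2"
  shows "real (card {p \<in> permutations_of_set {1..n}. contains_bv p [1,2,3] {} {0,1}})
           = 1/2 * fact (n - 1) * real (n - 2)"
proof -
  define P where "P = permutations_of_set {1..n}"
  define A where "A = {p \<in> P. \<exists>a b. a<b \<and> b<n \<and> p!a=1 \<and> p!b=2}"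
  define B where "B = {p \<in> P. \<exists>a b. a<b \<and> b<n \<and> p!a=2 \<and> p!b=1}"
  define C where "C = {p \<in> P. p!(n-1) = 2}"
  have Pprops: "set p = {1..n} \<and> distinct p \<and> length p = n" if "p \<in> P" for p
    using that distinct_card by (fastforce simp: P_def permutations_of_set_def)
  have cP: "card P = fact n" unfolding P_def by simp
  have fP: "finite P" using cP by (metis card.infinite fact_nonzero)
  have s12: "sw 1 = 2" "sw 2 = 1" by (auto simp: sw_def)
  have AB: "map sw ` A \<subseteq> B" "map sw ` B \<subseteq> A"
    using swap_sub[OF assms, of 1 2] swap_sub[OF assms, of 2 1] unfolding A_def B_def P_def s12 by auto
  have injm: "inj (map sw)" using inj_sw by (simp add: inj_mapI)
  have fA: "finite A" "finite B" using fP by (auto simp: A_def B_def)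
  have i1: "card (map sw ` A) = card A" by (rule card_image[OF inj_on_subset[OF injm subset_UNIV]])
  have i2: "card (map sw ` B) = card B" by (rule card_image[OF inj_on_subset[OF injm subset_UNIV]])
  have "card A \<le> card B" using i1 card_mono[OF fA(2) AB(1)] by linarith
  moreover have "card B \<le> card A" using i2 card_mono[OF fA(1) AB(2)] by linarith
  ultimately have cAB: "card A = card B" by simp
  have "A \<union> B = P"
  proof
    show "A \<union> B \<subseteq> P" by (auto simp: A_def B_def)
    show "P \<subseteq> A \<union> B"
    proof
      fix p assume p: "p \<in> P"
      hence pp: "set p = {1..n}" "distinct p" "length p = n" using Pprops by auto
      have "1 \<in> set p" "2 \<in> set p" using pp assms by auto
      then obtain a b where ab: "a < n" "b < n" "p!a = 1" "p!b = 2" by (metis in_set_conv_nth pp(3))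
      have "a \<noteq> b" using ab by auto
      hence "a < b \<or> b < a" by auto
      thus "p \<in> A \<union> B" using ab p unfolding A_def B_def by blast
    qed
  qed
  moreover have "A \<inter> B = {}"
  proof (rule ccontr)
    assume "A \<inter> B \<noteq> {}"
    then obtain p a b a' b' where p: "p \<in> P" "a<b" "b<n" "p!a=1" "p!b=2" "a'<b'" "b'<n" "p!a'=2" "p!b'=1"
      unfolding A_def B_def by blast
    hence pp: "distinct p" "length p = n" using Pprops by auto
    have "a = b'" using nth_eq_iff_index_eq[OF pp(1), of a b'] p pp by auto
    moreover have "b = a'" using nth_eq_iff_index_eq[OF pp(1), of b a'] p pp by auto
    ultimately show False using p by auto
  qed
  ultimately have "card A + card B = fact n" using card_Un_disjoint[OF fA] cP by simp
  hence cA: "2 * card A = fact n" using cAB by simp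
  have CA: "C \<subseteq> A"
  proof
    fix p assume p: "p \<in> C"
    hence pp: "set p = {1..n}" "distinct p" "length p = n" "p \<in> P" "p!(n-1) = 2" using Pprops by (auto simp: C_def)
    have "1 \<in> set p" using pp assms by auto
    then obtain a where a: "a < n" "p!a = 1" using pp(3) by (auto simp: in_set_conv_nth)
    have "a \<noteq> n - 1" using a pp by auto
    thus "p \<in> A" using a pp assms unfolding A_def by (intro CollectI conjI exI[of _ a] exI[of _ "n-1"]) auto
  qed
  have Ceq: "C = (\<lambda>q. q @ [2]) ` permutations_of_set ({1..n} - {2})"
  proof
    show "C \<subseteq> (\<lambda>q. q @ [2]) ` permutations_of_set ({1..n} - {2})"
    proof
      fix p assume p: "p \<in> C"
      hence pp: "set p = {1..n}" "distinct p" "length p = n" "p!(n-1) = 2" using Pprops by (auto simp: C_def)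
      have ne: "p \<noteq> []" using pp assms by auto
      have l2: "last p = 2" using ne pp by (simp add: last_conv_nth)
      have e: "p = butlast p @ [2]" using append_butlast_last_id[OF ne] l2 by simp
      have "distinct (butlast p @ [2])" using pp(2) by (subst (asm) e)
      hence d: "distinct (butlast p)" "2 \<notin> set (butlast p)" by auto
      have "set p = set (butlast p @ [2])" by (rule arg_cong[OF e])
      hence "set p = insert 2 (set (butlast p))" by simp
      hence "set (butlast p) = {1..n} - {2}" using pp(1) d(2) by auto
      hence "butlast p \<in> permutations_of_set ({1..n} - {2})"
        using d unfolding permutations_of_set_def by simp
      thus "p \<in> (\<lambda>q. q @ [2]) ` permutations_of_set ({1..n} - {2})" by (rule image_eqI[where f="\<lambda>q. q @ [2]" and x="butlast p", OF e])
    qed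
    show "(\<lambda>q. q @ [2]) ` permutations_of_set ({1..n} - {2}) \<subseteq> C"
    proof
      fix p assume "p \<in> (\<lambda>q. q @ [2]) ` permutations_of_set ({1..n} - {2})"
      then obtain q where q0: "p = q @ [2]" "q \<in> permutations_of_set ({1..n} - {2})" by (rule imageE)
      hence q: "p = q @ [2]" "set q = {1..n} - {2}" "distinct q" unfolding permutations_of_set_def by auto
      have "insert 2 ({1..n} - {2}) = {1..n}" using assms by auto
      hence sp: "set p = {1..n}" using q by simp
      have dp: "distinct p" using q by simp
      have lp: "length p = n" using distinct_card[OF dp] sp by simp
      have "length q = n - 1" using lp q(1) by simp
      hence "p!(n-1) = 2" unfolding q(1) by (simp add: nth_append)
      thus "p \<in> C" using sp dp unfolding C_def P_def permutations_of_set_def by blast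
    qed
  qed
  have "card C = fact (n - 1)"
    unfolding Ceq by (subst card_image) (auto simp: inj_on_def card_Diff_singleton assms)
  have T: "{p \<in> permutations_of_set {1..n}. contains_bv p [1,2,3] {} {0,1}} = A - C"
  proof
    show "{p \<in> permutations_of_set {1..n}. contains_bv p [1,2,3] {} {0,1}} \<subseteq> A - C"
    proof
      fix p assume p: "p \<in> {p \<in> permutations_of_set {1..n}. contains_bv p [1,2,3] {} {0,1}}"
      hence "\<exists>a b. a < b \<and> b < n - 1 \<and> p!a = 1 \<and> p!b = 2" using char[of p n] by simp
      then obtain a b where ab: "a < b" "b < n - 1" "p!a = 1" "p!b = 2" by blast
      have pp: "p \<in> P" "distinct p" "length p = n" using p Pprops P_def by auto
      have "p!(n-1) \<noteq> 2" using nth_eq_iff_index_eq[OF pp(2), of b "n-1"] ab pp by auto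
      thus "p \<in> A - C" using ab pp unfolding A_def C_def by (intro DiffI CollectI conjI exI[of _ a] exI[of _ b]) auto
    qed
    show "A - C \<subseteq> {p \<in> permutations_of_set {1..n}. contains_bv p [1,2,3] {} {0,1}}"
    proof
      fix p assume p: "p \<in> A - C"
      then obtain a b where ab: "a < b" "b < n" "p!a = 1" "p!b = 2" "p \<in> P" "p!(n-1) \<noteq> 2"
        unfolding A_def C_def by blast
      have "b \<noteq> n - 1" using ab by auto
      hence "b < n - 1" using ab by auto
      thus "p \<in> {p \<in> permutations_of_set {1..n}. contains_bv p [1,2,3] {} {0,1}}"
        using char[of p n] ab unfolding P_def by auto
    qed
  qed
  have "card (A - C) = card A - card C" using card_Diff_subset[OF _ CA] fA(1) finite_subset[OF CA] by auto
  have fn: "fact n = real n * fact (n-1)" using assms fact_reduce[of n] by (simp add: of_nat_mult)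
  have fin: "real (card (A - C)) = 1/2 * fact (n - 1) * real (n - 2)"
  proof -
    have r1: "real (card (A - C)) = real (card A) - real (card C)"
      using \<open>card (A - C) = card A - card C\<close> card_mono[OF fA(1) CA] by (simp add: of_nat_diff)
    have r2: "2 * real (card A) = fact n" using arg_cong[OF cA, of real] by simp
    have r3: "real (card C) = fact (n - 1)" using \<open>card C = fact (n - 1)\<close> by simp
    have r4: "real (n - 2) = real n - 2" using assms by (simp add: of_nat_diff)
    show ?thesis using r1 r2 r3 r4 fn by (simp add: algebra_simps)
  qed
  show ?thesis unfolding T by (rule fin)
qed
end
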